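(* Let $h$ and $k$ be positive integers. If $a$ and $\ell$ are positive integers such that $k = a\ell$, then the sumset size set $\mathcal{R}_{\mathbf{Z}}(h,k)$ contains the arithmetic progression \[ \left\{ (\ell-1)hb + (a-1)h + 1 : b \in [a,(a-1)h+1] \right\}. \]
   Context: For a positive integer $h$ and a finite set $A$ of integers, $hA$ denotes the set of all sums $a_1+\cdots+a_h$ with $a_1,\ldots,a_h \in A$ (not necessarily distinct). The sumset size set is $\mathcal{R}_{\mathbf{Z}}(h,k) = \{ |hA| : A \subseteq \mathbf{Z},\ |A| = k\}$. For real $u,v$, $[u,v] = \{n \in \mathbf{Z} : u \le n \le v\}$. *)

theory Defs
  imports Main
begin

definition hfold_sumset :: "nat \<Rightarrow> int set \<Rightarrow> int set" where
  "hfold_sumset h A = {(\<Sum>i<h. f i) | f. \<forall>i<h. f i \<in> A}"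

definition sumset_sizes :: "nat \<Rightarrow> nat \<Rightarrow> nat set" where
  "sumset_sizes h k = {card (hfold_sumset h A) | A. finite A \<and> card A = k}"

end

theory Submission
  imports Defs
begin

lemma decomp:
  fixes X c :: nat
  shows "X \<le> h * c \<Longrightarrow> \<exists>f. (\<forall>i<h. f i \<le> c) \<and> (\<Sum>i<h. f i) = X"
proof (induction h arbitrary: X)
  case 0
  then show ?case by auto
next
  case (Suc h)
  have "X - min c X \<le> h * c" using Suc.prems by auto
  then obtain f where f: "\<forall>i<h. f i \<le> c" "(\<Sum>i<h. f i) = X - min c X"
    using Suc.IH by blast
  define g where "g = f(h := min c X)"
  have "(\<Sum>i<Suc h. g i) = (\<Sum>i<h. g i) + g h" by simp
  also have "(\<Sum>i<h. g i) = (\<Sum>i<h. f i)" unfolding g_def by (intro sum.cong) auto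
  finally have "(\<Sum>i<Suc h. g i) = X" using f by (simp add: g_def)
  moreover have "\<forall>i<Suc h. g i \<le> c" using f by (auto simp: g_def less_Suc_eq)
  ultimately show ?case by blast
qed

lemma card_int_helper: "card {0..int (N::nat)} = N + 1"
  unfolding card_atLeastAtMost_int by simp

theorem mainTheorem3:
  fixes h k a l :: nat
  assumes "h \<ge> 1" and "k \<ge> 1" and "a \<ge> 1" and "l \<ge> 1" and "k = a * l"
  shows "{(l - 1) * h * b + (a - 1) * h + 1 | b. a \<le> b \<and> b \<le> (a - 1) * h + 1}
           \<subseteq> sumset_sizes h k"
proof
  fix t assume "t \<in> {(l - 1) * h * b + (a - 1) * h + 1 | b. a \<le> b \<and> b \<le> (a - 1) * h + 1}"
  then obtain b where t: "t = (l - 1) * h * b + (a - 1) * h + 1" and ab: "a \<le> b"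
    and bh: "b \<le> (a - 1) * h + 1" by blast
  define N where "N = (l - 1) * h * b + (a - 1) * h"
  define A where "A = (\<lambda>(x,y). int x + int b * int y) ` ({..<a} \<times> {..<l})"
  have inj: "inj_on (\<lambda>(x,y). int x + int b * int y) ({..<a} \<times> {..<l})"
  proof (rule inj_onI, clarsimp)
    fix x y x' y' assume xa: "x < a" "x' < a" and eq: "int x + int b * int y = int x' + int b * int y'"
    have "(x + b * y) = (x' + b * y')" using eq by (metis of_nat_add of_nat_mult of_nat_eq_iff)
    then have "(x + b * y) mod b = (x' + b * y') mod b" "(x + b * y) div b = (x' + b * y') div b" by auto
    moreover have "x < b" "x' < b" using xa ab by auto
    ultimately show "x = x' \<and> y = y'" by simp
  qed
  have fin: "finite A" unfolding A_def by simp
  have cardA: "card A = k" unfolding A_def using card_image[OF inj] assms(5)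
    by (simp add: card_cartesian_product)
  have Aprops: "0 \<le> z \<and> z \<le> int (a - 1) + int b * int (l - 1)" if "z \<in> A" for z
  proof -
    from that obtain x y where z: "z = int x + int b * int y" and "x < a" "y < l" unfolding A_def by auto
    then have "x \<le> a - 1" "y \<le> l - 1" by auto
    then have "int b * int y \<le> int b * int (l - 1)" by (intro mult_left_mono) auto
    then show ?thesis using z \<open>x \<le> a - 1\<close> by auto
  qed
  have eqset: "hfold_sumset h A = {0..int N}"
  proof
    show "hfold_sumset h A \<subseteq> {0..int N}"
    proof
      fix s assume "s \<in> hfold_sumset h A"
      then obtain f where s: "s = (\<Sum>i<h. f i)" and f: "\<forall>i<h. f i \<in> A"
        unfolding hfold_sumset_def by blast
      have "s \<ge> 0" unfolding s using f Aprops by (intro sum_nonneg) auto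
      moreover have "s \<le> of_nat (card {..<h}) * (int (a - 1) + int b * int (l - 1))"
        unfolding s using f Aprops by (intro sum_bounded_above) auto
      moreover have "of_nat (card {..<h}) * (int (a - 1) + int b * int (l - 1)) = int N"
        unfolding N_def by (simp only: card_lessThan of_nat_add of_nat_mult) (simp add: algebra_simps)
      ultimately show "s \<in> {0..int N}" by auto
    qed
  next
    show "{0..int N} \<subseteq> hfold_sumset h A"
    proof
      fix s assume "s \<in> {0..int N}"
      then obtain n where s: "s = int n" and nN: "n \<le> N"
        by (metis atLeastAtMost_iff nat_0_le nat_le_iff)
      define Y where "Y = min (n div b) (h * (l - 1))"
      define X where "X = n - b * Y"
      have bY: "b * Y \<le> n" unfolding Y_def
        by (metis min.cobounded1 mult.commute mult_le_mono2 div_times_less_eq_dividend order_trans)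
      have Xb: "X \<le> h * (a - 1)"
      proof (cases "n div b \<le> h * (l - 1)")
        case True
        then have "X = n mod b" unfolding X_def Y_def by (simp add: minus_mult_div_eq_mod)
        moreover have "n mod b < b" using ab assms(3) by auto
        ultimately show ?thesis using bh by (simp add: mult.commute)
      next
        case False
        then have "Y = h * (l - 1)" unfolding Y_def by simp
        then show ?thesis unfolding X_def using nN unfolding N_def by (simp add: algebra_simps)
      qed
      have Yb: "Y \<le> h * (l - 1)" unfolding Y_def by simp
      obtain fx where fx: "\<forall>i<h. fx i \<le> a - 1" "(\<Sum>i<h. fx i) = X" using decomp[OF Xb] by blast
      obtain fy where fy: "\<forall>i<h. fy i \<le> l - 1" "(\<Sum>i<h. fy i) = Y" using decomp[OF Yb] by blast
      define f where "f i = int (fx i) + int b * int (fy i)" for i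
      have "\<forall>i<h. f i \<in> A"
      proof (intro allI impI)
        fix i assume "i < h"
        then have "fx i < a" "fy i < l" using fx fy assms by force+
        then show "f i \<in> A" unfolding f_def A_def by force
      qed
      moreover have "(\<Sum>i<h. f i) = int X + int b * int Y"
        unfolding f_def sum.distrib fx(2)[symmetric] fy(2)[symmetric]
        by (simp add: sum_distrib_left)
      moreover have "int X + int b * int Y = s" unfolding s X_def using bY by simp
      ultimately have "s = (\<Sum>i<h. f i) \<and> (\<forall>i<h. f i \<in> A)" by simp
      then show "s \<in> hfold_sumset h A" unfolding hfold_sumset_def by (intro CollectI exI[of _ f])
    qed
  qed
  have cN: "card {0..int N} = N + 1" by (rule card_int_helper)
  have "t = N + 1" unfolding t N_def by (rule refl)
  then have "t = card (hfold_sumset h A)" unfolding eqset cN .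
  then show "t \<in> sumset_sizes h k" unfolding sumset_sizes_def
    using fin cardA by (intro CollectI exI[of _ A]) simp
qed

end
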